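(* Let ${\mathbb X}$ be a non-degenerate Ptolemaic normed space, let $M\colon[0,\infty)\times[0,\infty)\to[0,\infty)$ be symmetric and moderately increasing, and suppose $\rho_M(x,y)=\dfrac{\Vert x-y\Vert}{M(\Vert x\Vert,\Vert y\Vert)}$ is a metric on ${\mathbb X}$. Let $g\colon{\mathbb X}\to{\mathbb X}$ satisfy $g(0)=0$ and $\frac1L\Vert x-y\Vert\le\Vert g(x)-g(y)\Vert\le L\Vert x-y\Vert$ for all $x,y\in{\mathbb X}$, for some $L\ge 1$. Then $\frac1{L^3}\rho_M(x,y)\le\rho_M(g(x),g(y))\le L^3\rho_M(x,y)$ for all $x,y\in{\mathbb X}$.
   Context: A normed space ${\mathbb X}$ is Ptolemaic if $\Vert z-w\Vert\Vert x-y\Vert\le\Vert y-w\Vert\Vert x-z\Vert+\Vert x-w\Vert\Vert z-y\Vert$ for all $x,y,z,w$; non-degenerate means ${\mathbb X}\ne\{0\}$. Convention $0/0=0$; metrics may take the value $\infty$. A function $f\colon[0,\infty)\to[0,\infty)$ is moderately increasing if it is increasing and $f(t)/t$ is decreasing; a function $M$ of two variables is moderately increasing if $M(x,\cdot)$ and $M(\cdot,x)$ are moderately increasing for each fixed $x\ge 0$. *)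

theory Defs
  imports "HOL-Analysis.Analysis" "HOL-Library.Extended_Real"
begin

definition ptolemaic :: "('a::real_normed_vector) itself \<Rightarrow> bool" where
  "ptolemaic _ \<longleftrightarrow> (\<forall>x y z w :: 'a.
     norm (z - w) * norm (x - y) \<le> norm (y - w) * norm (x - z) + norm (x - w) * norm (z - y))"

definition mod_incr :: "(real \<Rightarrow> real) \<Rightarrow> bool" where
  "mod_incr f \<longleftrightarrow> (\<forall>s t. 0 \<le> s \<longrightarrow> s \<le> t \<longrightarrow> f s \<le> f t) \<and>
                   (\<forall>s t. 0 < s \<longrightarrow> s \<le> t \<longrightarrow> f t / t \<le> f s / s)"

definition mod_incr2 :: "(real \<Rightarrow> real \<Rightarrow> real) \<Rightarrow> bool" where
  "mod_incr2 M \<longleftrightarrow> (\<forall>x\<ge>0. mod_incr (M x) \<and> mod_incr (\<lambda>t. M t x))"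

definition rhoM :: "(real \<Rightarrow> real \<Rightarrow> real) \<Rightarrow> 'a::real_normed_vector \<Rightarrow> 'a \<Rightarrow> ereal" where
  "rhoM M x y = (if M (norm x) (norm y) = 0
      then (if x = y then 0 else \<infinity>)
      else ereal (norm (x - y) / M (norm x) (norm y)))"

definition ext_metric :: "('a \<Rightarrow> 'a \<Rightarrow> ereal) \<Rightarrow> bool" where
  "ext_metric d \<longleftrightarrow> (\<forall>x y. 0 \<le> d x y) \<and> (\<forall>x y. d x y = 0 \<longleftrightarrow> x = y) \<and>
     (\<forall>x y. d x y = d y x) \<and> (\<forall>x y z. d x z \<le> d x y + d y z)"

end

theory Submission
  imports Defs
begin

lemma mi_bounds:
  assumes f: "mod_incr f" and nn: "\<forall>t\<ge>0. 0 \<le> f t" and L: "L \<ge> 1" and u: "u \<ge> 0"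
    and a1: "u / L \<le> a" and a2: "a \<le> L * u"
  shows "f u / L \<le> f a \<and> f a \<le> L * f u"
proof (cases "u = 0")
  case True
  then have "a = 0" using a1 a2 by simp
  moreover have "0 \<le> f 0" using nn by simp
  ultimately show ?thesis using True L
    by (simp add: divide_le_eq mult_le_cancel_right1 mult_le_cancel_left1 order_trans[of "f 0" "1 * f 0"])
next
  case False
  then have up: "u > 0" using u by simp
  have Lp: "L > 0" using L by simp
  have inc: "\<And>s t. 0 \<le> s \<Longrightarrow> s \<le> t \<Longrightarrow> f s \<le> f t" and dec: "\<And>s t. 0 < s \<Longrightarrow> s \<le> t \<Longrightarrow> f t / t \<le> f s / s"
    using f unfolding mod_incr_def by auto
  have "u \<le> L * u" using L u by (simp add: mult_le_cancel_right1)
  then have "f (L*u) / (L*u) \<le> f u / u" using dec[OF up] by blast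
  then have h1: "f (L*u) \<le> L * f u" using up Lp by (simp add: divide_simps mult.commute)
  have "u * 1 \<le> u * L" using L u by (rule mult_left_mono)
  then have "u / L \<le> u" using Lp by (simp add: pos_divide_le_eq)
  moreover have "u / L > 0" using up Lp by simp
  ultimately have "f u / u \<le> f (u/L) / (u/L)" using dec by blast
  then have h2: "f u / L \<le> f (u/L)" using up Lp by (simp add: divide_simps)
  have "f a \<le> f (L*u)" using inc a2 a1 \<open>u/L > 0\<close> by simp
  moreover have "f (u/L) \<le> f a" using inc a1 \<open>u/L > 0\<close> by simp
  ultimately show ?thesis using h1 h2 by simp
qed

theorem lemma2p1:
  fixes M :: "real \<Rightarrow> real \<Rightarrow> real" and g :: "'a::real_normed_vector \<Rightarrow> 'a" and L :: real
  assumes "ptolemaic TYPE('a)"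
    and "\<exists>x::'a. x \<noteq> 0"
    and "\<forall>s\<ge>0. \<forall>t\<ge>0. 0 \<le> M s t"
    and "\<forall>s\<ge>0. \<forall>t\<ge>0. M s t = M t s"
    and "mod_incr2 M"
    and "ext_metric (rhoM M :: 'a \<Rightarrow> 'a \<Rightarrow> ereal)"
    and "g 0 = 0"
    and "L \<ge> 1"
    and "\<forall>x y. norm (x - y) / L \<le> norm (g x - g y) \<and> norm (g x - g y) \<le> L * norm (x - y)"
  shows "\<forall>x y. ereal (1 / L ^ 3) * rhoM M x y \<le> rhoM M (g x) (g y) \<and>
               rhoM M (g x) (g y) \<le> ereal (L ^ 3) * rhoM M x y"
proof (intro allI)
  fix x y :: 'a
  have L: "L \<ge> 1" and Lp: "L > 0" using assms(8) by auto
  have nn: "\<And>s t. s \<ge> 0 \<Longrightarrow> t \<ge> 0 \<Longrightarrow> 0 \<le> M s t" using assms(3) by auto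
  have mi1: "\<And>s. s \<ge> 0 \<Longrightarrow> mod_incr (M s)" and mi2: "\<And>s. s \<ge> 0 \<Longrightarrow> mod_incr (\<lambda>t. M t s)"
    using assms(5) unfolding mod_incr2_def by auto
  have bl: "\<And>x y. norm (x - y) / L \<le> norm (g x - g y) \<and> norm (g x - g y) \<le> L * norm (x - y)"
    using assms(9) by auto
  define u where "u = norm x"
  define v where "v = norm y"
  define a where "a = norm (g x)"
  define b where "b = norm (g y)"
  have ab: "u / L \<le> a \<and> a \<le> L * u" "v / L \<le> b \<and> b \<le> L * v"
    using bl[of x 0] bl[of y 0] assms(7) unfolding u_def v_def a_def b_def by auto
  have pos: "u \<ge> 0" "v \<ge> 0" "a \<ge> 0" "b \<ge> 0" unfolding u_def v_def a_def b_def by auto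
  have s1: "M u b / L \<le> M a b \<and> M a b \<le> L * M u b"
    using mi_bounds[OF mi2[OF pos(4)] _ L pos(1)] ab(1) nn pos by auto
  have s2: "M u v / L \<le> M u b \<and> M u b \<le> L * M u v"
    using mi_bounds[OF mi1[OF pos(1)] _ L pos(2)] ab(2) nn pos by auto
  define m where "m = M u v"
  define m' where "m' = M a b"
  have m0: "m \<ge> 0" using nn pos unfolding m_def by auto
  have up: "m' \<le> L * (L * m)" using s1 s2 Lp unfolding m_def m'_def
    by (meson mult_left_mono order_trans less_imp_le)
  have lo: "m / L / L \<le> m'" using s1 s2 Lp unfolding m_def m'_def
    by (meson divide_right_mono order_trans less_imp_le)
  have eq: "g x = g y \<longleftrightarrow> x = y" using bl[of x y] Lp by (auto simp: divide_le_0_iff)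
  define d where "d = norm (x - y)"
  define d' where "d' = norm (g x - g y)"
  have dd: "d / L \<le> d'" "d' \<le> L * d" using bl[of x y] unfolding d_def d'_def by auto
  have d0: "d \<ge> 0" unfolding d_def by simp
  show "ereal (1 / L ^ 3) * rhoM M x y \<le> rhoM M (g x) (g y) \<and>
               rhoM M (g x) (g y) \<le> ereal (L ^ 3) * rhoM M x y"
  proof (cases "m = 0")
    case True
    then have "m' = 0" using up lo Lp m0 nn pos unfolding m'_def
      by (metis mult_zero_right order_antisym)
    then show ?thesis using True eq Lp
      unfolding rhoM_def m_def m'_def u_def v_def a_def b_def by auto
  next
    case False
    then have mp: "m > 0" using m0 by simp
    have mp': "m' > 0" using lo mp Lp by (meson divide_pos_pos less_le_trans)
    have r1: "(1 / L^3) * (d / m) \<le> d' / m'"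
    proof -
      have "(1 / L^3) * (d / m) = (d / L) / (L * (L * m))" by (simp add: power3_eq_cube field_simps)
      also have "\<dots> \<le> d' / (L * (L * m))" using mp Lp by (intro divide_right_mono[OF dd(1)]) simp
      also have "\<dots> \<le> d' / m'" using up mp' mp Lp unfolding d'_def
        by (intro divide_left_mono) auto
      finally show ?thesis .
    qed
    have r2: "d' / m' \<le> L^3 * (d / m)"
    proof -
      have "d' / m' \<le> (L * d) / m'" using dd(2) mp' by (simp add: divide_right_mono)
      also have "\<dots> \<le> (L * d) / (m / L / L)" using lo mp mp' Lp d0
        by (intro divide_left_mono) auto
      also have "\<dots> = L^3 * (d / m)" using Lp mp by (simp add: power3_eq_cube field_simps)
      finally show ?thesis .
    qed
    show ?thesis using r1 r2 mp mp'
      unfolding rhoM_def m_def m'_def u_def v_def a_def b_def d_def d'_def by auto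
  qed
qed

end
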